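(* Let $(X,\gamma)$ and $(Y,\nu)$ be probability spaces. Let $(E_i)_{i\ge1}$ be pairwise independent measurable subsets of $X$ and $(F_i)_{i\ge1}$ pairwise independent measurable subsets of $Y$ such that $\gamma(E_i)=\nu(F_i)$ for all $i$ and $\sum_{i=1}^\infty\gamma(E_i)=\infty$. Then for all measurable $E\subseteq X$, $F\subseteq Y$ and every $\varepsilon>0$ there exists a positive integer $i$ such that both $\gamma(E\cap E_i)>(\gamma(E)-\varepsilon)\gamma(E_i)$ and $\nu(F\cap F_i)>(\nu(F)-\varepsilon)\nu(F_i)$. *)

theory Defs
  imports "HOL-Probability.Probability"
begin

end

theory Submission
  imports Defs
begin

lemma (in prob_space) indep_event_prob:
  assumes "indep_event A B" shows "prob (A \<inter> B) = prob A * prob B"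
proof -
  have H: "\<forall>J\<subseteq>UNIV. J \<noteq> {} \<longrightarrow> finite J \<longrightarrow> prob (\<Inter>j\<in>J. case_bool A B j) = (\<Prod>j\<in>J. prob (case_bool A B j))"
    using assms unfolding indep_event_def indep_events_def by (rule conjunct2)
  have "prob (\<Inter>i\<in>UNIV. case_bool A B i) = (\<Prod>i\<in>UNIV. prob (case_bool A B i))"
    using H[rule_format, OF subset_refl UNIV_not_empty finite_class.finite_UNIV] .
  moreover have "(\<Inter>i\<in>UNIV. case_bool A B i) = A \<inter> B" by (auto split: bool.splits)
  moreover have "(\<Prod>i\<in>UNIV. prob (case_bool A B i)) = prob A * prob B" by (simp add: UNIV_bool)
  ultimately show ?thesis by simp
qed

lemma (in prob_space) keyA:
  fixes EE :: "nat \<Rightarrow> 'a set"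
  assumes E: "E \<in> sets M" and T: "finite T"
  and ev: "\<And>i. i\<in>T \<Longrightarrow> EE i \<in> sets M"
  and ind: "\<And>i j. i\<in>T \<Longrightarrow> j\<in>T \<Longrightarrow> i\<noteq>j \<Longrightarrow> indep_event (EE i) (EE j)"
  and eps: "\<epsilon> > 0"
  and le: "\<And>i. i\<in>T \<Longrightarrow> prob (E \<inter> EE i) \<le> (prob E - \<epsilon>) * prob (EE i)"
  shows "\<epsilon>^2 * (\<Sum>i\<in>T. prob (EE i)) \<le> 1"
proof -
  define p where "p i = prob (EE i)" for i
  define f where "f i x = indicator (EE i) x - p i" for i x
  have p01: "0 \<le> p i" "p i \<le> 1" for i unfolding p_def by auto
  have fm: "f i \<in> borel_measurable M" if "i \<in> T" for i
    unfolding f_def using ev[OF that] by measurable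
  have fb: "\<bar>f i x\<bar> \<le> 1" for i x
    using p01[of i] unfolding f_def by (auto simp: indicator_def)
  have intf: "integrable M (f i)" if "i \<in> T" for i
    by (rule integrable_const_bound[where B=1]) (use fm[OF that] fb in auto)
  have intEf: "integrable M (\<lambda>x. indicator E x * f i x)" if "i \<in> T" for i
    by (rule integrable_const_bound[where B=1]) (use fm[OF that] fb E in \<open>auto simp: indicator_def abs_mult\<close>)
  have intff: "integrable M (\<lambda>x. f i x * f j x)" if "i \<in> T" "j \<in> T" for i j
  proof (rule integrable_const_bound[where B=1])
    show "AE x in M. norm (f i x * f j x) \<le> 1"
      by (intro AE_I2) (simp add: abs_mult mult_le_one[OF fb abs_ge_zero fb])
  qed (use fm that in auto)
  have intE: "integrable M (indicator E :: _ \<Rightarrow> real)" using E by (simp add: emeasure_eq_measure)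
  have IEf: "(\<integral>x. indicator E x * f i x \<partial>M) = prob (E \<inter> EE i) - prob E * p i" if "i \<in> T" for i
  proof -
    have eq: "(\<lambda>x. indicator E x * f i x) = (\<lambda>x. indicator (E \<inter> EE i) x - p i * indicator E x)"
      by (auto simp: f_def indicator_def fun_eq_iff)
    then have "(\<integral>x. indicator E x * f i x \<partial>M) = (\<integral>x. indicator (E \<inter> EE i) x - p i * indicator E x \<partial>M)"
      by (subst eq) (rule refl)
    also have "\<dots> = prob (E \<inter> EE i) - p i * prob E"
      using E ev[OF that] by (simp add: emeasure_eq_measure sets.Int_space_eq2)
    finally show ?thesis by (simp add: mult.commute)
  qed
  have Iff: "(\<integral>x. f i x * f j x \<partial>M) = (if i = j then p i - (p i)^2 else 0)" if "i \<in> T" "j \<in> T" for i j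
  proof -
    have "(\<lambda>x. f i x * f j x) = (\<lambda>x. indicator (EE i \<inter> EE j) x - p j * indicator (EE i) x - p i * indicator (EE j) x + p i * p j)"
      by (auto simp: f_def indicator_def fun_eq_iff algebra_simps)
    note eq = this
    then have "(\<integral>x. f i x * f j x \<partial>M) = (\<integral>x. indicator (EE i \<inter> EE j) x - p j * indicator (EE i) x - p i * indicator (EE j) x + p i * p j \<partial>M)"
      by (subst eq) (rule refl)
    also have "\<dots> = prob (EE i \<inter> EE j) - p j * p i - p i * p j + p i * p j"
      using ev[OF that(1)] ev[OF that(2)] by (simp add: emeasure_eq_measure p_def prob_space)
    finally have "(\<integral>x. f i x * f j x \<partial>M) = prob (EE i \<inter> EE j) - p i * p j" by simp
    then show ?thesis using ind[OF that] indep_event_prob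
      by (auto simp: p_def power2_eq_square)
  qed
  define g where "g x = indicator E x + \<epsilon> * (\<Sum>i\<in>T. f i x)" for x
  have g2: "(g x)^2 = indicator E x + 2 * \<epsilon> * (\<Sum>i\<in>T. indicator E x * f i x)
      + \<epsilon>^2 * (\<Sum>i\<in>T. \<Sum>j\<in>T. f i x * f j x)" for x
    unfolding g_def power2_eq_square
    by (simp add: algebra_simps sum_distrib_left sum_product indicator_def)
  have "0 \<le> (\<integral>x. (g x)^2 \<partial>M)" by simp
  also have "\<dots> = prob E + 2 * \<epsilon> * (\<Sum>i\<in>T. prob (E \<inter> EE i) - prob E * p i)
      + \<epsilon>^2 * (\<Sum>i\<in>T. p i - (p i)^2)"
  proof -
    have "(\<integral>x. (g x)^2 \<partial>M) = (\<integral>x. indicator E x + 2 * \<epsilon> * (\<Sum>i\<in>T. indicator E x * f i x)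
      + \<epsilon>^2 * (\<Sum>i\<in>T. \<Sum>j\<in>T. f i x * f j x) \<partial>M)" by (simp add: g2)
    also have "\<dots> = prob E + 2 * \<epsilon> * (\<Sum>i\<in>T. (\<integral>x. indicator E x * f i x \<partial>M))
      + \<epsilon>^2 * (\<Sum>i\<in>T. \<Sum>j\<in>T. (\<integral>x. f i x * f j x \<partial>M))"
    proof -
      have i1: "integrable M (\<lambda>x. 2 * \<epsilon> * (\<Sum>i\<in>T. indicator E x * f i x))"
        using intEf by (auto intro!: integrable_mult_right integrable_sum)
      have i2: "integrable M (\<lambda>x. \<epsilon>^2 * (\<Sum>i\<in>T. \<Sum>j\<in>T. f i x * f j x))"
        using intff by (auto intro!: integrable_mult_right integrable_sum)
      have i3: "integrable M (\<lambda>x. indicator E x + 2 * \<epsilon> * (\<Sum>i\<in>T. indicator E x * f i x))"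
        by (rule Bochner_Integration.integrable_add[OF intE i1])
      have "(\<integral>x. indicator E x + 2 * \<epsilon> * (\<Sum>i\<in>T. indicator E x * f i x)
        + \<epsilon>^2 * (\<Sum>i\<in>T. \<Sum>j\<in>T. f i x * f j x) \<partial>M)
        = (\<integral>x. indicator E x \<partial>M) + (\<integral>x. 2 * \<epsilon> * (\<Sum>i\<in>T. indicator E x * f i x) \<partial>M)
        + (\<integral>x. \<epsilon>^2 * (\<Sum>i\<in>T. \<Sum>j\<in>T. f i x * f j x) \<partial>M)"
        using Bochner_Integration.integral_add[OF i3 i2] Bochner_Integration.integral_add[OF intE i1] by simp
      also have "\<dots> = prob E + 2 * \<epsilon> * (\<Sum>i\<in>T. (\<integral>x. indicator E x * f i x \<partial>M))
      + \<epsilon>^2 * (\<Sum>i\<in>T. \<Sum>j\<in>T. (\<integral>x. f i x * f j x \<partial>M))"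
        using E intEf intff
        by (simp add: Bochner_Integration.integral_sum integrable_sum)
      finally show ?thesis .
    qed
    also have "\<dots> = prob E + 2 * \<epsilon> * (\<Sum>i\<in>T. prob (E \<inter> EE i) - prob E * p i)
      + \<epsilon>^2 * (\<Sum>i\<in>T. p i - (p i)^2)"
      using T by (simp add: IEf Iff cong: sum.cong)
    finally show ?thesis .
  qed
  also have "\<dots> \<le> 1 + 2 * \<epsilon> * (\<Sum>i\<in>T. - (\<epsilon> * p i)) + \<epsilon>^2 * (\<Sum>i\<in>T. p i)"
  proof -
    have a: "(\<Sum>i\<in>T. prob (E \<inter> EE i) - prob E * p i) \<le> (\<Sum>i\<in>T. - (\<epsilon> * p i))"
    proof (rule sum_mono)
      fix i assume "i \<in> T"
      then have "prob (E \<inter> EE i) \<le> prob E * p i - \<epsilon> * p i"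
        using le unfolding p_def by (simp add: left_diff_distrib)
      then show "prob (E \<inter> EE i) - prob E * p i \<le> - (\<epsilon> * p i)" by linarith
    qed
    have b: "(\<Sum>i\<in>T. p i - (p i)^2) \<le> (\<Sum>i\<in>T. p i)"
      by (rule sum_mono) simp
    have a2: "2*\<epsilon> * (\<Sum>i\<in>T. prob (E \<inter> EE i) - prob E * p i) \<le> 2*\<epsilon> * (\<Sum>i\<in>T. - (\<epsilon> * p i))"
      by (rule mult_left_mono[OF a]) (use eps in simp)
    have b2: "\<epsilon>^2 * (\<Sum>i\<in>T. p i - (p i)^2) \<le> \<epsilon>^2 * (\<Sum>i\<in>T. p i)"
      by (rule mult_left_mono[OF b]) simp
    show ?thesis using a2 b2 prob_le_1[of E] by linarith
  qed
  also have "\<dots> = 1 - \<epsilon>^2 * (\<Sum>i\<in>T. p i)"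
  proof -
    have s: "(\<Sum>i\<in>T. - (\<epsilon> * p i)) = - (\<epsilon> * sum p T)"
      by (simp add: sum_negf sum_distrib_left)
    have "1 + 2 * \<epsilon> * (- (\<epsilon> * sum p T)) + \<epsilon>^2 * sum p T = 1 - \<epsilon>^2 * sum p T"
      by (simp add: power2_eq_square algebra_simps)
    then show ?thesis by (simp only: s)
  qed
  finally have "\<epsilon>^2 * sum p T \<le> 1" by linarith
  then show ?thesis unfolding p_def[abs_def] .
qed
theorem mainTheorem12:
  fixes M :: "'a measure" and N :: "'b measure"
    and EE :: "nat \<Rightarrow> 'a set" and FF :: "nat \<Rightarrow> 'b set"
  assumes "prob_space M" and "prob_space N"
    and "\<And>i. i \<ge> 1 \<Longrightarrow> EE i \<in> sets M"
    and "\<And>i. i \<ge> 1 \<Longrightarrow> FF i \<in> sets N"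
    and "\<And>i j. i \<ge> 1 \<Longrightarrow> j \<ge> 1 \<Longrightarrow> i \<noteq> j \<Longrightarrow> prob_space.indep_event M (EE i) (EE j)"
    and "\<And>i j. i \<ge> 1 \<Longrightarrow> j \<ge> 1 \<Longrightarrow> i \<noteq> j \<Longrightarrow> prob_space.indep_event N (FF i) (FF j)"
    and "\<And>i. i \<ge> 1 \<Longrightarrow> measure M (EE i) = measure N (FF i)"
    and "\<not> summable (\<lambda>i. measure M (EE (Suc i)))"
    and "E \<in> sets M" and "F \<in> sets N" and "(\<epsilon>::real) > 0"
  shows "\<exists>i::nat. i \<ge> 1 \<and>
           measure M (E \<inter> EE i) > (measure M E - \<epsilon>) * measure M (EE i) \<and>
           measure N (F \<inter> FF i) > (measure N F - \<epsilon>) * measure N (FF i)"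
proof (rule ccontr)
  assume H: "\<not> ?thesis"
  interpret M: prob_space M by fact
  interpret N: prob_space N by fact
  define SA where "SA = {i::nat. i \<ge> 1 \<and> \<not> (measure M (E \<inter> EE i) > (measure M E - \<epsilon>) * measure M (EE i))}"
  have e2: "\<epsilon>^2 > 0" using assms(11) by simp
  have bA: "(\<Sum>i\<in>T. measure M (EE i)) \<le> 1 / \<epsilon>^2" if "finite T" "T \<subseteq> SA" for T
  proof -
    have TA: "1 \<le> i" "\<not> (measure M (E \<inter> EE i) > (measure M E - \<epsilon>) * measure M (EE i))" if "i \<in> T" for i
      using that \<open>T \<subseteq> SA\<close> unfolding SA_def by blast+
    have "\<epsilon>^2 * (\<Sum>i\<in>T. measure M (EE i)) \<le> 1"
    proof (rule M.keyA[OF assms(9) that(1)])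
      fix i assume "i \<in> T"
      from TA(2)[OF this] show "measure M (E \<inter> EE i) \<le> (measure M E - \<epsilon>) * measure M (EE i)"
        by (simp only: not_less)
    qed ((use TA(1) assms(3,5,11) in blast)+)
    then show ?thesis using e2 by (simp add: pos_le_divide_eq mult.commute)
  qed
  have bB: "(\<Sum>i\<in>T. measure M (EE i)) \<le> 1 / \<epsilon>^2" if "finite T" "T \<subseteq> {i. i \<ge> 1} - SA" for T
  proof -
    have T1: "\<And>i. i \<in> T \<Longrightarrow> 1 \<le> i" using that(2) by blast
    have "\<epsilon>^2 * (\<Sum>i\<in>T. measure N (FF i)) \<le> 1"
    proof (rule N.keyA[OF assms(10) that(1)])
      fix i assume i: "i \<in> T"
      have i1: "i \<ge> 1" "measure M (E \<inter> EE i) > (measure M E - \<epsilon>) * measure M (EE i)"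
        using i that(2) unfolding SA_def by blast+
      have "\<not> (measure N (F \<inter> FF i) > (measure N F - \<epsilon>) * measure N (FF i))"
        using H i1 by blast
      then show "measure N (F \<inter> FF i) \<le> (measure N F - \<epsilon>) * measure N (FF i)"
        by (simp only: not_less)
    qed ((use T1 assms(4,6,11) in blast)+)
    moreover have "(\<Sum>i\<in>T. measure N (FF i)) = (\<Sum>i\<in>T. measure M (EE i))"
    proof (rule sum.cong)
      fix x assume "x \<in> T"
      then show "measure N (FF x) = measure M (EE x)" using T1 assms(7) by metis
    qed simp
    ultimately show ?thesis using e2 by (simp add: pos_le_divide_eq mult.commute)
  qed
  have "summable (\<lambda>i. measure M (EE (Suc i)))"
  proof (rule summableI_nonneg_bounded)
    fix n
    let ?T = "Suc ` {..<n}"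
    have "(\<Sum>i<n. measure M (EE (Suc i))) = (\<Sum>i\<in>?T. measure M (EE i))"
      by (simp add: sum.reindex)
    also have "\<dots> = (\<Sum>i\<in>?T \<inter> SA. measure M (EE i)) + (\<Sum>i\<in>?T - SA. measure M (EE i))"
      by (rule sum.Int_Diff) simp
    also have "\<dots> \<le> 1 / \<epsilon>^2 + 1 / \<epsilon>^2"
    proof (rule add_mono)
      show "(\<Sum>i\<in>?T \<inter> SA. measure M (EE i)) \<le> 1 / \<epsilon>^2"
        by (rule bA) auto
      show "(\<Sum>i\<in>?T - SA. measure M (EE i)) \<le> 1 / \<epsilon>^2"
        by (rule bB) auto
    qed
    finally show "(\<Sum>i<n. measure M (EE (Suc i))) \<le> 2 / \<epsilon>^2" by simp
  qed simp
  then show False using assms(8) by simp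
qed

end
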